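(* Let $\mathfrak{g}$, $P$, $QT_{\mathfrak{g}}$ and $\tau_\pm$ be as in the context, and for $\gamma\in SL(2,\mathbb{Z})$ let $A_\gamma$ denote the corresponding automorphism of $QT_{\mathfrak{g}}$ generated by $\tau_\pm$ (with the composition convention of the context). If $\gamma=\begin{pmatrix} b & a\\ p & r\end{pmatrix}\in SL(2,\mathbb{Z})$, then for all $\lambda,\mu\in P$, $$A_\gamma(Y^\lambda X^\mu)=q^{-2(\mu,\mu)ab-4(\mu,\lambda)ap-2(\lambda,\lambda)pr}\,Y^{r\lambda+a\mu}X^{p\lambda+b\mu}.$$
   Context: $\mathbb{C}_q$ denotes the algebraic closure of $\mathbb{C}((q))$. Let $\mathfrak{g}$ be simply laced with invariant bilinear form $(\cdot,\cdot)$, fundamental weights $w_1,\dots,w_r$ and weight lattice $P=\bigoplus_i\mathbb{Z}w_i$; the coweight lattice $P^\vee$ is identified with $P$ via $(\cdot,\cdot)$. $QT_{\mathfrak{g}}$ is the $\mathbb{C}_q$-algebra generated by $X^\mu,Y^\lambda$ ($\mu,\lambda\in P$) with $X^\mu X^{\mu'}=X^{\mu+\mu'}$, $Y^\lambda Y^{\lambda'}=Y^{\lambda+\lambda'}$, $X^0=Y^0=1$, $X^\mu Y^\lambda=q^{-4(\mu,\lambda)}Y^\lambda X^\mu$. Writing $X_i=X^{w_i}$, $Y_i=Y^{w_i}$, the automorphism $\tau_+$ is determined by $\tau_+(X_i)=q^{-2(w_i,w_i)}Y_iX_i$, $\tau_+(Y^\lambda)=Y^\lambda$, and $\tau_-$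 by $\tau_-(X^\mu)=X^\mu$, $\tau_-(Y_i)=q^{2(w_i,w_i)}X_iY_i$. Set $T_+=\begin{pmatrix}1&1\\0&1\end{pmatrix}$, $T_-=\begin{pmatrix}1&0\\1&1\end{pmatrix}$, $A_{T_\pm}=\tau_\pm$, $A_{T_\pm^{-1}}=\tau_\pm^{-1}$; for $\gamma=M_1M_2\cdots M_k$ with each $M_j\in\{T_\pm^{\pm1}\}$, $A_\gamma:=A_{M_k}\circ\cdots\circ A_{M_1}$. *)

theory Defs
  imports "HOL-Library.Poly_Mapping" "HOL-Library.Function_Algebras"
          "HOL-Computational_Algebra.Formal_Laurent_Series"
          "HOL-Algebra.Algebraic_Closure_Type"
begin

type_synonym Cq = "complex fls alg_closure"

definition q_var :: Cq where "q_var = to_ac fls_X"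

text \<open>A coherent choice of rational powers of q in Cq:
  qp x plays the role of q to the power x (x rational).\<close>
definition qpow_system :: "(rat \<Rightarrow> Cq) \<Rightarrow> bool" where
  "qpow_system qp \<longleftrightarrow> (\<forall>x y. qp (x + y) = qp x * qp y) \<and> qp 1 = q_var"

definition simply_laced_cartan :: "('n::finite \<Rightarrow> 'n \<Rightarrow> int) \<Rightarrow> bool" where
  "simply_laced_cartan C \<longleftrightarrow>
     (\<forall>i. C i i = 2) \<and> (\<forall>i j. i \<noteq> j \<longrightarrow> C i j \<in> {0, -1}) \<and>
     (\<forall>i j. C i j = C j i) \<and>
     (\<forall>v :: 'n \<Rightarrow> int. v \<noteq> 0 \<longrightarrow> (\<Sum>i. \<Sum>j. v i * C i j * v j) > 0)"

text \<open>B i j = (w_i, w_j): the Gram matrix of the fundamental weights, i.e.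
  the inverse Cartan matrix (normalization (alpha,alpha) = 2).\<close>
definition inverse_cartan :: "('n::finite \<Rightarrow> 'n \<Rightarrow> int) \<Rightarrow> ('n \<Rightarrow> 'n \<Rightarrow> rat) \<Rightarrow> bool" where
  "inverse_cartan C B \<longleftrightarrow>
     (\<forall>i j. (\<Sum>k. of_int (C i k) * B k j) = (if i = j then 1 else 0))"

text \<open>Weights in P are integer coordinate vectors w.r.t. the fundamental weights.\<close>
definition wform :: "('n::finite \<Rightarrow> 'n \<Rightarrow> rat) \<Rightarrow> ('n \<Rightarrow> int) \<Rightarrow> ('n \<Rightarrow> int) \<Rightarrow> rat" where
  "wform B lam mu = (\<Sum>i. \<Sum>j. of_int (lam i) * of_int (mu j) * B i j)"

definition fund_weight :: "'n \<Rightarrow> ('n \<Rightarrow> int)" where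
  "fund_weight i = (\<lambda>j. if j = i then 1 else 0)"

type_synonym 'n qt = "(('n \<Rightarrow> int) \<times> ('n \<Rightarrow> int)) \<Rightarrow>\<^sub>0 Cq"

text \<open>qt_mono lam mu is the monomial Y^lam X^mu.\<close>
definition qt_mono :: "('n \<Rightarrow> int) \<Rightarrow> ('n \<Rightarrow> int) \<Rightarrow> 'n qt" where
  "qt_mono lam mu = Poly_Mapping.single (lam, mu) 1"

definition qt_X :: "('n \<Rightarrow> int) \<Rightarrow> 'n qt" where "qt_X mu = qt_mono 0 mu"
definition qt_Y :: "('n \<Rightarrow> int) \<Rightarrow> 'n qt" where "qt_Y lam = qt_mono lam 0"
definition qt_one :: "'n qt" where "qt_one = qt_mono 0 0"

definition qt_smult :: "Cq \<Rightarrow> 'n qt \<Rightarrow> 'n qt" where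
  "qt_smult c x = Poly_Mapping.map (\<lambda>v. c * v) x"

text \<open>Multiplication: (Y^l1 X^m1)(Y^l2 X^m2) = q^(-4(m1,l2)) Y^(l1+l2) X^(m1+m2),
  from X^mu Y^lam = q^(-4(mu,lam)) Y^lam X^mu.\<close>
definition qt_mul :: "(rat \<Rightarrow> Cq) \<Rightarrow> ('n::finite \<Rightarrow> 'n \<Rightarrow> rat) \<Rightarrow> 'n qt \<Rightarrow> 'n qt \<Rightarrow> 'n qt" where
  "qt_mul qp B x y =
     (\<Sum>u\<in>Poly_Mapping.keys x. \<Sum>v\<in>Poly_Mapping.keys y.
        Poly_Mapping.single (fst u + fst v, snd u + snd v)
          (Poly_Mapping.lookup x u * Poly_Mapping.lookup y v * qp (-4 * wform B (snd u) (fst v))))"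

definition is_qt_alg_hom :: "(rat \<Rightarrow> Cq) \<Rightarrow> ('n::finite \<Rightarrow> 'n \<Rightarrow> rat) \<Rightarrow> ('n qt \<Rightarrow> 'n qt) \<Rightarrow> bool" where
  "is_qt_alg_hom qp B f \<longleftrightarrow>
     (\<forall>x y. f (x + y) = f x + f y) \<and>
     (\<forall>x y. f (qt_mul qp B x y) = qt_mul qp B (f x) (f y)) \<and>
     (\<forall>c x. f (qt_smult c x) = qt_smult c (f x)) \<and>
     f qt_one = qt_one"

definition tau_plus :: "(rat \<Rightarrow> Cq) \<Rightarrow> ('n::finite \<Rightarrow> 'n \<Rightarrow> rat) \<Rightarrow> 'n qt \<Rightarrow> 'n qt" where
  "tau_plus qp B = (THE f. is_qt_alg_hom qp B f \<and>
     (\<forall>i. f (qt_X (fund_weight i)) =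
          qt_smult (qp (-2 * wform B (fund_weight i) (fund_weight i)))
            (qt_mul qp B (qt_Y (fund_weight i)) (qt_X (fund_weight i)))) \<and>
     (\<forall>lam. f (qt_Y lam) = qt_Y lam))"

definition tau_minus :: "(rat \<Rightarrow> Cq) \<Rightarrow> ('n::finite \<Rightarrow> 'n \<Rightarrow> rat) \<Rightarrow> 'n qt \<Rightarrow> 'n qt" where
  "tau_minus qp B = (THE f. is_qt_alg_hom qp B f \<and>
     (\<forall>mu. f (qt_X mu) = qt_X mu) \<and>
     (\<forall>i. f (qt_Y (fund_weight i)) =
          qt_smult (qp (2 * wform B (fund_weight i) (fund_weight i)))
            (qt_mul qp B (qt_X (fund_weight i)) (qt_Y (fund_weight i)))))"

text \<open>2x2 integer matrices (b, a, p, r) stand for [[b, a], [p, r]].\<close>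
type_synonym mat2 = "int \<times> int \<times> int \<times> int"

fun mat2_mult :: "mat2 \<Rightarrow> mat2 \<Rightarrow> mat2" where
  "mat2_mult (b, a, p, r) (b', a', p', r') =
     (b * b' + a * p', b * a' + a * r', p * b' + r * p', p * a' + r * r')"

datatype sl2gen = Tp | Tm | Tp_inv | Tm_inv

fun gen_mat :: "sl2gen \<Rightarrow> mat2" where
  "gen_mat Tp = (1, 1, 0, 1)"
| "gen_mat Tm = (1, 0, 1, 1)"
| "gen_mat Tp_inv = (1, -1, 0, 1)"
| "gen_mat Tm_inv = (1, 0, -1, 1)"

fun word_mat :: "sl2gen list \<Rightarrow> mat2" where
  "word_mat [] = (1, 0, 0, 1)"
| "word_mat (m # ms) = mat2_mult (gen_mat m) (word_mat ms)"

fun gen_aut :: "(rat \<Rightarrow> Cq) \<Rightarrow> ('n::finite \<Rightarrow> 'n \<Rightarrow> rat) \<Rightarrow> sl2gen \<Rightarrow> 'n qt \<Rightarrow> 'n qt" where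
  "gen_aut qp B Tp = tau_plus qp B"
| "gen_aut qp B Tm = tau_minus qp B"
| "gen_aut qp B Tp_inv = inv_into UNIV (tau_plus qp B)"
| "gen_aut qp B Tm_inv = inv_into UNIV (tau_minus qp B)"

text \<open>For gamma = M_1 M_2 ... M_k: A_gamma = A_{M_k} o ... o A_{M_1}.\<close>
fun word_aut :: "(rat \<Rightarrow> Cq) \<Rightarrow> ('n::finite \<Rightarrow> 'n \<Rightarrow> rat) \<Rightarrow> sl2gen list \<Rightarrow> 'n qt \<Rightarrow> 'n qt" where
  "word_aut qp B [] = id"
| "word_aut qp B (m # ms) = word_aut qp B ms \<circ> gen_aut qp B m"

end

theory Submission
  imports Defs
begin

type_synonym 'n key = "('n \<Rightarrow> int) \<times> ('n \<Rightarrow> int)"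

lemma lookup_smult: "Poly_Mapping.lookup (qt_smult c x) k = c * Poly_Mapping.lookup x k"
  unfolding qt_smult_def by (simp add: Poly_Mapping.map.rep_eq when_def)

lemma smult_single: "qt_smult c (Poly_Mapping.single k d) = Poly_Mapping.single k (c * d)"
  by (rule poly_mapping_eqI) (simp add: lookup_smult lookup_single when_def)

lemma pm_expand: "x = (\<Sum>k\<in>Poly_Mapping.keys x. Poly_Mapping.single k (Poly_Mapping.lookup x k))"
proof (rule poly_mapping_eqI)
  fix k'
  have "(\<Sum>k\<in>Poly_Mapping.keys x. Poly_Mapping.lookup (Poly_Mapping.single k (Poly_Mapping.lookup x k)) k')
      = (\<Sum>k\<in>Poly_Mapping.keys x. if k = k' then Poly_Mapping.lookup x k else 0)"
    by (simp add: lookup_single when_def)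
  also have "\<dots> = Poly_Mapping.lookup x k'"
    by (simp add: in_keys_iff)
  finally show "Poly_Mapping.lookup x k' = Poly_Mapping.lookup (\<Sum>k\<in>Poly_Mapping.keys x. Poly_Mapping.single k (Poly_Mapping.lookup x k)) k'"
    by (simp add: lookup_sum)
qed

lemma Sum_any_fin: "Sum_any (g :: 'a::finite \<Rightarrow> 'b::comm_monoid_add) = sum g UNIV"
  by (rule Sum_any.expand_superset) auto

lemma qp_0: assumes "qpow_system qp" shows "qp 0 = 1"
proof -
  have m: "qp (x + y) = qp x * qp y" for x y using assms by (simp add: qpow_system_def)
  have q1: "qp 1 = q_var" using assms by (simp add: qpow_system_def)
  have "q_var \<noteq> 0" unfolding q_var_def
    by (metis fls_X_nonzero to_ac_0 to_ac_eq_iff)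
  have "qp 1 = qp 1 * qp 0" using m[of 1 0] by simp
  with q1 \<open>q_var \<noteq> 0\<close> show ?thesis by simp
qed

lemma qp_add: assumes "qpow_system qp" shows "qp x * qp y = qp (x + y)"
  using assms by (simp add: qpow_system_def)

lemma B_sym:
  assumes "simply_laced_cartan C" "inverse_cartan C B"
  shows "B i j = B j i"
proof -
  have Cs: "C k l = C l k" for k l using assms(1) by (simp add: simply_laced_cartan_def)
  have inv: "(\<Sum>k\<in>UNIV. of_int (C i k) * B k j) = (if i = j then 1 else 0)" for i j
    using assms(2) by (simp add: inverse_cartan_def Sum_any_fin)
  have d: "(\<Sum>l\<in>UNIV. B l i * of_int (C l k)) = (if k = i then 1 else 0)" for k
  proof -
    have "(\<Sum>l\<in>UNIV. B l i * of_int (C l k)) = (\<Sum>l\<in>UNIV. of_int (C k l) * B l i)"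
      by (simp add: Cs mult.commute)
    also have "\<dots> = (if k = i then 1 else 0)" by (rule inv)
    finally show ?thesis .
  qed
  have "(\<Sum>k\<in>UNIV. (if k = i then 1 else 0) * B k j) = (\<Sum>k\<in>UNIV. if k = i then B k j else 0)"
    by (intro sum.cong refl) simp
  then have "B i j = (\<Sum>k\<in>UNIV. (if k = i then 1 else 0) * B k j)"
    by simp
  also have "\<dots> = (\<Sum>k\<in>UNIV. (\<Sum>l\<in>UNIV. B l i * of_int (C l k)) * B k j)"
    by (simp only: d)
  also have "\<dots> = (\<Sum>k\<in>UNIV. \<Sum>l\<in>UNIV. B l i * (of_int (C l k) * B k j))"
    by (simp add: sum_distrib_right mult.assoc)
  also have "\<dots> = (\<Sum>l\<in>UNIV. \<Sum>k\<in>UNIV. B l i * (of_int (C l k) * B k j))"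
    by (rule sum.swap)
  also have "\<dots> = (\<Sum>l\<in>UNIV. B l i * (\<Sum>k\<in>UNIV. of_int (C l k) * B k j))"
    by (simp add: sum_distrib_left)
  also have "\<dots> = (\<Sum>l\<in>UNIV. B l i * (if l = j then 1 else 0))"
    by (simp only: inv)
  also have "\<dots> = B j i" by (subst sum.cong[OF refl, of _ _ "\<lambda>l. if l = j then B l i else 0"]) simp_all
  finally show ?thesis .
qed

lemma wform_sym:
  assumes "\<And>i j. B i j = B j i"
  shows "wform B x y = wform B y x"
proof -
  have "wform B x y = (\<Sum>j. \<Sum>i. of_int (x i) * of_int (y j) * B i j)"
    unfolding wform_def Sum_any_fin by (rule sum.swap)
  also have "\<dots> = wform B y x"
    unfolding wform_def Sum_any_fin by (intro sum.cong refl) (metis assms mult.commute)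
  finally show ?thesis .
qed

lemma wform_add_left: "wform B (\<lambda>i. x i + y i) z = wform B x z + wform B y z"
  unfolding wform_def Sum_any_fin by (simp add: distrib_left distrib_right sum.distrib)

lemma wform_add_right: "wform B z (\<lambda>i. x i + y i) = wform B z x + wform B z y"
  unfolding wform_def Sum_any_fin by (simp add: distrib_left distrib_right sum.distrib)

lemma wform_plus_left: "wform B (x + y) z = wform B x z + wform B y z"
  unfolding plus_fun_def by (rule wform_add_left)

lemma wform_plus_right: "wform B z (x + y) = wform B z x + wform B z y"
  unfolding plus_fun_def by (rule wform_add_right)

lemma wform_smul_left: "wform B (\<lambda>i. c * x i) z = of_int c * wform B x z"
  unfolding wform_def Sum_any_fin by (simp add: sum_distrib_left ac_simps)

lemma wform_smul_right: "wform B z (\<lambda>i. c * x i) = of_int c * wform B z x"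
  unfolding wform_def Sum_any_fin by (simp add: sum_distrib_left ac_simps)

lemma wform_neg_left: "wform B (\<lambda>i. - x i) z = - wform B x z"
  unfolding wform_def Sum_any_fin by (simp add: sum_negf)

lemma wform_neg_right: "wform B z (\<lambda>i. - x i) = - wform B z x"
  unfolding wform_def Sum_any_fin by (simp add: sum_negf)

lemma wform_zero_left [simp]: "wform B 0 z = 0"
  unfolding wform_def Sum_any_fin by simp

lemma wform_zero_right [simp]: "wform B z 0 = 0"
  unfolding wform_def Sum_any_fin by simp

section \<open>Multiplication\<close>

lemma mul_superset:
  assumes "finite S" "Poly_Mapping.keys x \<subseteq> S" "finite T" "Poly_Mapping.keys y \<subseteq> T"
  shows "qt_mul qp B x y = (\<Sum>u\<in>S. \<Sum>v\<in>T.
        Poly_Mapping.single (fst u + fst v, snd u + snd v)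
          (Poly_Mapping.lookup x u * Poly_Mapping.lookup y v * qp (-4 * wform B (snd u) (fst v))))"
proof -
  let ?F = "\<lambda>u v. Poly_Mapping.single (fst u + fst v, snd u + snd v)
          (Poly_Mapping.lookup x u * Poly_Mapping.lookup y v * qp (-4 * wform B (snd u) (fst v)))"
  have inner: "(\<Sum>v\<in>Poly_Mapping.keys y. ?F u v) = (\<Sum>v\<in>T. ?F u v)" for u
    by (rule sum.mono_neutral_left) (use assms in \<open>auto simp: in_keys_iff\<close>)
  have "qt_mul qp B x y = (\<Sum>u\<in>Poly_Mapping.keys x. \<Sum>v\<in>T. ?F u v)"
    unfolding qt_mul_def by (simp only: inner)
  also have "\<dots> = (\<Sum>u\<in>S. \<Sum>v\<in>T. ?F u v)"
    by (rule sum.mono_neutral_left) (use assms in \<open>auto simp: in_keys_iff\<close>)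
  finally show ?thesis .
qed

lemma mul_add_left: "qt_mul qp B (x + x') y = qt_mul qp B x y + qt_mul qp B x' y"
proof -
  let ?S = "Poly_Mapping.keys x \<union> Poly_Mapping.keys x'"
  have k: "Poly_Mapping.keys (x + x') \<subseteq> ?S" by (rule keys_add)
  show ?thesis
    apply (subst mul_superset[of ?S _ "Poly_Mapping.keys y"], simp, fact k, simp, simp)+
    apply (subst mul_superset[of ?S x "Poly_Mapping.keys y"], simp, simp, simp, simp)
    apply (subst mul_superset[of ?S x' "Poly_Mapping.keys y"], simp, simp, simp, simp)
    apply (simp add: lookup_add distrib_right single_add sum.distrib)
    done
qed

lemma mul_add_right: "qt_mul qp B y (x + x') = qt_mul qp B y x + qt_mul qp B y x'"
proof -
  let ?S = "Poly_Mapping.keys x \<union> Poly_Mapping.keys x'"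
  have k: "Poly_Mapping.keys (x + x') \<subseteq> ?S" by (rule keys_add)
  show ?thesis
    apply (subst mul_superset[of "Poly_Mapping.keys y" _ ?S], simp, simp, simp, fact k)+
    apply (subst mul_superset[of "Poly_Mapping.keys y" _ ?S x], simp, simp, simp, simp)
    apply (subst mul_superset[of "Poly_Mapping.keys y" _ ?S x'], simp, simp, simp, simp)
    apply (simp add: lookup_add distrib_left distrib_right single_add sum.distrib)
    done
qed

lemma mul_zero_left [simp]: "qt_mul qp B 0 y = 0"
  unfolding qt_mul_def by simp

lemma mul_zero_right [simp]: "qt_mul qp B y 0 = 0"
  unfolding qt_mul_def by simp

lemma mul_sum_left: "qt_mul qp B (\<Sum>i\<in>I. f i) y = (\<Sum>i\<in>I. qt_mul qp B (f i) y)"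
  by (induction I rule: infinite_finite_induct) (simp_all add: mul_add_left)

lemma mul_sum_right: "qt_mul qp B y (\<Sum>i\<in>I. f i) = (\<Sum>i\<in>I. qt_mul qp B y (f i))"
  by (induction I rule: infinite_finite_induct) (simp_all add: mul_add_right)

lemma mul_single:
  "qt_mul qp B (Poly_Mapping.single u c) (Poly_Mapping.single v d) =
   Poly_Mapping.single (fst u + fst v, snd u + snd v) (c * d * qp (-4 * wform B (snd u) (fst v)))"
  unfolding qt_mul_def by (cases "c = 0"; cases "d = 0") simp_all


lemma mul_assoc:
  assumes q: "qpow_system qp"
  shows "qt_mul qp B (qt_mul qp B x y) z = qt_mul qp B x (qt_mul qp B y z)"
proof -
  have sa: "qt_mul qp B (qt_mul qp B (Poly_Mapping.single u a) (Poly_Mapping.single v b)) (Poly_Mapping.single w c)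
     = qt_mul qp B (Poly_Mapping.single u a) (qt_mul qp B (Poly_Mapping.single v b) (Poly_Mapping.single w c))"
    for u v w a b c
  proof -
    have e: "qp (-4 * wform B (snd u) (fst v)) * qp (-4 * wform B (snd u + snd v) (fst w))
        = qp (-4 * wform B (snd v) (fst w)) * qp (-4 * wform B (snd u) (fst v + fst w))"
      by (simp add: qp_add[OF q] wform_plus_left wform_plus_right algebra_simps)
    have "a * b * qp (-4 * wform B (snd u) (fst v)) * c * qp (-4 * wform B (snd u + snd v) (fst w))
       = (a * b * c) * (qp (-4 * wform B (snd u) (fst v)) * qp (-4 * wform B (snd u + snd v) (fst w)))"
      by (simp add: ac_simps)
    also have "\<dots> = (a * b * c) * (qp (-4 * wform B (snd v) (fst w)) * qp (-4 * wform B (snd u) (fst v + fst w)))"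
      by (simp only: e)
    also have "\<dots> = a * (b * c * qp (-4 * wform B (snd v) (fst w))) * qp (-4 * wform B (snd u) (fst v + fst w))"
      by (simp add: ac_simps)
    finally have c: "a * b * qp (-4 * wform B (snd u) (fst v)) * c * qp (-4 * wform B (snd u + snd v) (fst w))
       = a * (b * c * qp (-4 * wform B (snd v) (fst w))) * qp (-4 * wform B (snd u) (fst v + fst w))" .
    show ?thesis by (simp only: mul_single fst_conv snd_conv add.assoc c)
  qed
  have "qt_mul qp B (qt_mul qp B x y) z = qt_mul qp B (qt_mul qp B
      (\<Sum>k\<in>Poly_Mapping.keys x. Poly_Mapping.single k (Poly_Mapping.lookup x k))
      (\<Sum>k\<in>Poly_Mapping.keys y. Poly_Mapping.single k (Poly_Mapping.lookup y k)))
      (\<Sum>k\<in>Poly_Mapping.keys z. Poly_Mapping.single k (Poly_Mapping.lookup z k))"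
    by (simp only: pm_expand[symmetric])
  also have "\<dots> = qt_mul qp B
      (\<Sum>k\<in>Poly_Mapping.keys x. Poly_Mapping.single k (Poly_Mapping.lookup x k))
      (qt_mul qp B (\<Sum>k\<in>Poly_Mapping.keys y. Poly_Mapping.single k (Poly_Mapping.lookup y k))
      (\<Sum>k\<in>Poly_Mapping.keys z. Poly_Mapping.single k (Poly_Mapping.lookup z k)))"
    by (simp only: mul_sum_left mul_sum_right sa)
  also have "\<dots> = qt_mul qp B x (qt_mul qp B y z)"
    by (simp only: pm_expand[symmetric])
  finally show ?thesis .
qed

lemma mul_one_left:
  assumes q: "qpow_system qp"
  shows "qt_mul qp B qt_one x = x"
proof -
  have "qt_mul qp B qt_one x = qt_mul qp B qt_one
      (\<Sum>k\<in>Poly_Mapping.keys x. Poly_Mapping.single k (Poly_Mapping.lookup x k))"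
    by (simp only: pm_expand[symmetric])
  also have "\<dots> = (\<Sum>k\<in>Poly_Mapping.keys x. Poly_Mapping.single k (Poly_Mapping.lookup x k))"
    by (simp add: mul_sum_right qt_one_def qt_mono_def mul_single qp_0[OF q])
  also have "\<dots> = x" by (rule pm_expand[symmetric])
  finally show ?thesis .
qed

lemma mul_one_right:
  assumes q: "qpow_system qp"
  shows "qt_mul qp B x qt_one = x"
proof -
  have "qt_mul qp B x qt_one = qt_mul qp B
      (\<Sum>k\<in>Poly_Mapping.keys x. Poly_Mapping.single k (Poly_Mapping.lookup x k)) qt_one"
    by (simp only: pm_expand[symmetric])
  also have "\<dots> = (\<Sum>k\<in>Poly_Mapping.keys x. Poly_Mapping.single k (Poly_Mapping.lookup x k))"
    by (simp add: mul_sum_left qt_one_def qt_mono_def mul_single qp_0[OF q])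
  also have "\<dots> = x" by (rule pm_expand[symmetric])
  finally show ?thesis .
qed

section \<open>Uniqueness of homomorphisms\<close>

lemma lattice_all:
  fixes S :: "('n::finite \<Rightarrow> int) set"
  assumes z: "0 \<in> S" and ad: "\<And>x y. x \<in> S \<Longrightarrow> y \<in> S \<Longrightarrow> x + y \<in> S"
    and p: "\<And>i. fund_weight i \<in> S" and n: "\<And>i. (\<lambda>j. - fund_weight i j) \<in> S"
  shows "m \<in> S"
proof -
  have nm: "(\<lambda>j. int k * fund_weight i j) \<in> S \<and> (\<lambda>j. - int k * fund_weight i j) \<in> S" for k i
  proof (induction k)
    case 0
    then show ?case using z by (simp add: zero_fun_def)
  next
    case (Suc k)
    have e1: "(\<lambda>j. int (Suc k) * fund_weight i j) = (\<lambda>j. int k * fund_weight i j) + fund_weight i"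
      by (simp add: plus_fun_def algebra_simps)
    have e2: "(\<lambda>j. - int (Suc k) * fund_weight i j) = (\<lambda>j. - int k * fund_weight i j) + (\<lambda>j. - fund_weight i j)"
      by (simp add: plus_fun_def algebra_simps)
    show ?case using Suc ad p n unfolding e1 e2 by blast
  qed
  have im: "(\<lambda>j. c * fund_weight i j) \<in> S" for c i
  proof (cases "c \<ge> 0")
    case True
    then have "c = int (nat c)" by simp
    then show ?thesis using nm[of "nat c" i] by metis
  next
    case False
    then have "c = - int (nat (- c))" by simp
    then show ?thesis using nm[of "nat (-c)" i] by metis
  qed
  have fs: "(\<lambda>j. \<Sum>i\<in>A. m i * fund_weight i j) \<in> S" for A :: "'n set"
  proof -
    have "finite A" by simp
    then show ?thesis
    proof (induction A rule: finite_induct)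
      case empty
      then show ?case using z by (simp add: zero_fun_def)
    next
      case (insert a A)
      have "(\<lambda>j. \<Sum>i\<in>insert a A. m i * fund_weight i j) = (\<lambda>j. m a * fund_weight a j) + (\<lambda>j. \<Sum>i\<in>A. m i * fund_weight i j)"
        using insert by (simp add: plus_fun_def)
      then show ?case using insert ad im by metis
    qed
  qed
  have "m = (\<lambda>j. \<Sum>i\<in>UNIV. m i * fund_weight i j)"
  proof
    fix j
    have "(\<Sum>i\<in>UNIV. m i * fund_weight i j) = (\<Sum>i\<in>UNIV. if i = j then m i else 0)"
      by (intro sum.cong refl) (simp add: fund_weight_def)
    then show "m j = (\<Sum>i\<in>UNIV. m i * fund_weight i j)" by simp
  qed
  then show ?thesis using fs by metis
qed

lemma hom_facts:
  assumes "is_qt_alg_hom qp B f"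
  shows "f (x + y) = f x + f y" "f (qt_mul qp B x y) = qt_mul qp B (f x) (f y)"
    "f (qt_smult c x) = qt_smult c (f x)" "f qt_one = qt_one"
  using assms unfolding is_qt_alg_hom_def by auto

lemma hom_zero:
  assumes "is_qt_alg_hom qp B f" shows "f 0 = 0"
proof -
  have "f (0 + 0) = f 0 + f 0" by (rule hom_facts(1)[OF assms])
  then show ?thesis by simp
qed

lemma hom_sum:
  assumes "is_qt_alg_hom qp B f" shows "f (\<Sum>i\<in>I. h i) = (\<Sum>i\<in>I. f (h i))"
  by (induction I rule: infinite_finite_induct) (simp_all add: hom_zero[OF assms] hom_facts(1)[OF assms])

lemma agree_group:
  fixes G :: "('n::finite \<Rightarrow> int) \<Rightarrow> 'n qt"
  assumes q: "qpow_system qp" and f: "is_qt_alg_hom qp B f" and g: "is_qt_alg_hom qp B g"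
    and GG: "\<And>a b. qt_mul qp B (G a) (G b) = G (a + b)" and G0: "G 0 = qt_one"
    and agr: "\<And>i. f (G (fund_weight i)) = g (G (fund_weight i))"
  shows "f (G m) = g (G m)"
proof -
  let ?mul = "qt_mul qp B"
  have inv: "f (G (\<lambda>j. - w j)) = g (G (\<lambda>j. - w j))" if a: "f (G w) = g (G w)" for w
  proof -
    have n1: "(\<lambda>j. - w j) + w = 0" and n2: "w + (\<lambda>j. - w j) = 0"
      by (simp_all add: fun_eq_iff plus_fun_def)
    let ?n = "G (\<lambda>j. - w j)"
    have "f ?n = ?mul (f ?n) qt_one" by (simp add: mul_one_right[OF q])
    also have "\<dots> = ?mul (f ?n) (g (?mul (G w) ?n))"
      by (simp add: GG n2 G0 hom_facts(4)[OF g])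
    also have "\<dots> = ?mul (f ?n) (?mul (g (G w)) (g ?n))"
      by (simp add: hom_facts(2)[OF g])
    also have "\<dots> = ?mul (?mul (f ?n) (f (G w))) (g ?n)"
      by (simp add: mul_assoc[OF q] a)
    also have "\<dots> = ?mul (f (?mul ?n (G w))) (g ?n)"
      by (simp add: hom_facts(2)[OF f])
    also have "\<dots> = g ?n"
      by (simp add: GG n1 G0 hom_facts(4)[OF f] mul_one_left[OF q])
    finally show ?thesis .
  qed
  show ?thesis
  proof (rule lattice_all[of "{m. f (G m) = g (G m)}", simplified])
    show "f (G 0) = g (G 0)" by (simp add: G0 hom_facts(4)[OF f] hom_facts(4)[OF g])
    show "f (G (x + y)) = g (G (x + y))" if "f (G x) = g (G x)" "f (G y) = g (G y)" for x y
      using that by (simp add: GG[symmetric] hom_facts(2)[OF f] hom_facts(2)[OF g])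
    show "f (G (fund_weight i)) = g (G (fund_weight i))" for i by (rule agr)
    show "f (G (\<lambda>j. - fund_weight i j)) = g (G (\<lambda>j. - fund_weight i j))" for i
      by (rule inv) (rule agr)
  qed
qed

lemma hom_unique:
  fixes f g :: "'n::finite qt \<Rightarrow> 'n qt"
  assumes q: "qpow_system qp" and f: "is_qt_alg_hom qp B f" and g: "is_qt_alg_hom qp B g"
    and X: "\<And>i. f (qt_X (fund_weight i)) = g (qt_X (fund_weight i))"
    and Y: "\<And>i. f (qt_Y (fund_weight i)) = g (qt_Y (fund_weight i))"
  shows "f = g"
proof
  fix x
  have XX: "qt_mul qp B (qt_X a) (qt_X b) = qt_X (a + b)" for a b :: "'n \<Rightarrow> int"
    by (simp add: qt_X_def qt_mono_def mul_single qp_0[OF q])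
  have YY: "qt_mul qp B (qt_Y a) (qt_Y b) = qt_Y (a + b)" for a b :: "'n \<Rightarrow> int"
    by (simp add: qt_Y_def qt_mono_def mul_single qp_0[OF q])
  have AX: "f (qt_X m) = g (qt_X m)" for m
    by (rule agree_group[OF q f g XX]) (simp add: qt_X_def qt_one_def zero_fun_def, rule X)
  have AY: "f (qt_Y m) = g (qt_Y m)" for m
    by (rule agree_group[OF q f g YY]) (simp add: qt_Y_def qt_one_def zero_fun_def, rule Y)
  have M: "Poly_Mapping.single k c = qt_smult c (qt_mul qp B (qt_Y (fst k)) (qt_X (snd k)))" for k c
    by (simp add: qt_X_def qt_Y_def qt_mono_def mul_single qp_0[OF q] smult_single)
  have "f (Poly_Mapping.single k c) = g (Poly_Mapping.single k c)" for k c
    unfolding M by (simp add: hom_facts(2,3)[OF f] hom_facts(2,3)[OF g] AX AY)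
  then have "f (\<Sum>k\<in>Poly_Mapping.keys x. Poly_Mapping.single k (Poly_Mapping.lookup x k))
      = g (\<Sum>k\<in>Poly_Mapping.keys x. Poly_Mapping.single k (Poly_Mapping.lookup x k))"
    by (simp add: hom_sum[OF f] hom_sum[OF g])
  then show "f x = g x" by (simp only: pm_expand[symmetric])
qed


section \<open>Monomial maps\<close>

definition mmap :: "('n key \<Rightarrow> 'n key) \<Rightarrow> ('n key \<Rightarrow> Cq) \<Rightarrow> 'n qt \<Rightarrow> 'n qt" where
  "mmap \<psi> s x = Abs_poly_mapping (\<lambda>k. s k * Poly_Mapping.lookup x (\<psi> k))"

lemma lookup_mmap:
  assumes "inj \<psi>"
  shows "Poly_Mapping.lookup (mmap \<psi> s x) k = s k * Poly_Mapping.lookup x (\<psi> k)"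
proof -
  have "{k. s k * Poly_Mapping.lookup x (\<psi> k) \<noteq> 0} \<subseteq> \<psi> -` Poly_Mapping.keys x"
    by (auto simp: in_keys_iff)
  moreover have "finite (\<psi> -` Poly_Mapping.keys x)"
    by (rule finite_vimageI) (use assms in auto)
  ultimately have "finite {k. s k * Poly_Mapping.lookup x (\<psi> k) \<noteq> 0}"
    by (rule finite_subset)
  then show ?thesis unfolding mmap_def by simp
qed

lemma mmap_single:
  assumes "inj \<psi>" "\<psi> (\<phi> u) = u"
  shows "mmap \<psi> s (Poly_Mapping.single u c) = Poly_Mapping.single (\<phi> u) (s (\<phi> u) * c)"
proof (rule poly_mapping_eqI)
  fix k
  have "\<psi> k = u \<longleftrightarrow> k = \<phi> u"
    using assms by (metis injD)
  then show "Poly_Mapping.lookup (mmap \<psi> s (Poly_Mapping.single u c)) k =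
      Poly_Mapping.lookup (Poly_Mapping.single (\<phi> u) (s (\<phi> u) * c)) k"
    by (auto simp: lookup_mmap[OF assms(1)] lookup_single when_def)
qed

lemma mmap_sum:
  assumes "inj \<psi>"
  shows "mmap \<psi> s (\<Sum>i\<in>I. h i) = (\<Sum>i\<in>I. mmap \<psi> s (h i))"
  by (rule poly_mapping_eqI) (simp add: lookup_mmap[OF assms] lookup_sum sum_distrib_left)

lemma mmap_hom:
  fixes \<phi> \<psi> :: "'n::finite key \<Rightarrow> 'n key"
  assumes q: "qpow_system qp"
    and i1: "\<And>u. \<psi> (\<phi> u) = u" and i2: "\<And>u. \<phi> (\<psi> u) = u"
    and ad: "\<And>l1 m1 l2 m2. \<phi> (l1 + l2, m1 + m2) = (fst (\<phi> (l1, m1)) + fst (\<phi> (l2, m2)), snd (\<phi> (l1, m1)) + snd (\<phi> (l2, m2)))"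
    and z: "\<phi> (0, 0) = (0, 0)" and s0: "s (0, 0) = 1"
    and sc: "\<And>l1 m1 l2 m2. s (\<phi> (l1 + l2, m1 + m2)) * qp (-4 * wform B m1 l2) =
       s (\<phi> (l1, m1)) * s (\<phi> (l2, m2)) * qp (-4 * wform B (snd (\<phi> (l1, m1))) (fst (\<phi> (l2, m2))))"
  shows "is_qt_alg_hom qp B (mmap \<psi> s)"
proof -
  have inj: "inj \<psi>" by (metis i2 injI)
  have ms: "mmap \<psi> s (Poly_Mapping.single u c) = Poly_Mapping.single (\<phi> u) (s (\<phi> u) * c)" for u c
    by (rule mmap_single[OF inj i1])
  have sh: "mmap \<psi> s (qt_mul qp B (Poly_Mapping.single u a) (Poly_Mapping.single v b)) =
      qt_mul qp B (mmap \<psi> s (Poly_Mapping.single u a)) (mmap \<psi> s (Poly_Mapping.single v b))" for u v a b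
  proof -
    obtain l1 m1 where u: "u = (l1, m1)" by (cases u)
    obtain l2 m2 where v: "v = (l2, m2)" by (cases v)
    have k: "\<phi> (l1 + l2, m1 + m2) = (fst (\<phi> (l1, m1)) + fst (\<phi> (l2, m2)), snd (\<phi> (l1, m1)) + snd (\<phi> (l2, m2)))"
      by (rule ad)
    have cf: "s (\<phi> (l1 + l2, m1 + m2)) * (a * b * qp (-4 * wform B m1 l2)) =
       s (\<phi> (l1, m1)) * a * (s (\<phi> (l2, m2)) * b) * qp (-4 * wform B (snd (\<phi> (l1, m1))) (fst (\<phi> (l2, m2))))"
    proof -
      have "s (\<phi> (l1 + l2, m1 + m2)) * (a * b * qp (-4 * wform B m1 l2)) =
          (a * b) * (s (\<phi> (l1 + l2, m1 + m2)) * qp (-4 * wform B m1 l2))" by (simp add: ac_simps)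
      also have "\<dots> = (a * b) * (s (\<phi> (l1, m1)) * s (\<phi> (l2, m2)) * qp (-4 * wform B (snd (\<phi> (l1, m1))) (fst (\<phi> (l2, m2)))))"
        by (simp only: sc)
      finally show ?thesis by (simp add: ac_simps)
    qed
    show ?thesis
      unfolding u v
      apply (simp only: mul_single ms fst_conv snd_conv)
      apply (subst cf)
      apply (subst k)
      apply (rule refl)
      done
  qed
  show ?thesis unfolding is_qt_alg_hom_def
  proof (intro conjI allI)
    fix x y
    show "mmap \<psi> s (x + y) = mmap \<psi> s x + mmap \<psi> s y"
      by (rule poly_mapping_eqI) (simp add: lookup_mmap[OF inj] lookup_add distrib_left)
    have "mmap \<psi> s (qt_mul qp B x y) = mmap \<psi> s (qt_mul qp B
      (\<Sum>k\<in>Poly_Mapping.keys x. Poly_Mapping.single k (Poly_Mapping.lookup x k))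
      (\<Sum>k\<in>Poly_Mapping.keys y. Poly_Mapping.single k (Poly_Mapping.lookup y k)))"
      by (simp only: pm_expand[symmetric])
    also have "\<dots> = qt_mul qp B (mmap \<psi> s
      (\<Sum>k\<in>Poly_Mapping.keys x. Poly_Mapping.single k (Poly_Mapping.lookup x k)))
      (mmap \<psi> s (\<Sum>k\<in>Poly_Mapping.keys y. Poly_Mapping.single k (Poly_Mapping.lookup y k)))"
      by (simp only: mul_sum_left mul_sum_right mmap_sum[OF inj] sh)
    also have "\<dots> = qt_mul qp B (mmap \<psi> s x) (mmap \<psi> s y)"
      by (simp only: pm_expand[symmetric])
    finally show "mmap \<psi> s (qt_mul qp B x y) = qt_mul qp B (mmap \<psi> s x) (mmap \<psi> s y)" .
  next
    fix c x
    show "mmap \<psi> s (qt_smult c x) = qt_smult c (mmap \<psi> s x)"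
      by (rule poly_mapping_eqI) (simp add: lookup_mmap[OF inj] lookup_smult ac_simps)
  next
    show "mmap \<psi> s qt_one = qt_one"
      unfolding qt_one_def qt_mono_def by (simp add: ms z s0)
  qed
qed

lemma mmap_inv:
  fixes \<psi>1 \<psi>2 :: "'n key \<Rightarrow> 'n key"
  assumes i1: "\<And>u. \<psi>1 (\<psi>2 u) = u" and i2: "\<And>u. \<psi>2 (\<psi>1 u) = u"
    and c1: "\<And>k. s1 k * s2 (\<psi>1 k) = 1" and c2: "\<And>k. s2 k * s1 (\<psi>2 k) = 1"
  shows "inv_into UNIV (mmap \<psi>1 s1) = mmap \<psi>2 s2"
proof
  fix y
  have inj1: "inj \<psi>1" by (metis i2 injI)
  have inj2: "inj \<psi>2" by (metis i1 injI)
  have a: "mmap \<psi>2 s2 (mmap \<psi>1 s1 x) = x" for x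
    by (rule poly_mapping_eqI) (simp add: lookup_mmap[OF inj1] lookup_mmap[OF inj2] i1 mult.assoc[symmetric] c2)
  have b: "mmap \<psi>1 s1 (mmap \<psi>2 s2 x) = x" for x
    by (rule poly_mapping_eqI) (simp add: lookup_mmap[OF inj1] lookup_mmap[OF inj2] i2 mult.assoc[symmetric] c1)
  have "inj (mmap \<psi>1 s1)" by (metis a injI)
  then show "inv_into UNIV (mmap \<psi>1 s1) y = mmap \<psi>2 s2 y"
    by (rule inv_into_f_eq) (simp_all add: b)
qed


section \<open>The generators\<close>

lemma wform_diff_left: "wform B (x - y) z = wform B x z - wform B y z"
  unfolding wform_def Sum_any_fin fun_diff_def by (simp add: left_diff_distrib sum_subtractf)

lemma wform_diff_right: "wform B z (x - y) = wform B z x - wform B z y"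
  unfolding wform_def Sum_any_fin fun_diff_def by (simp add: right_diff_distrib left_diff_distrib sum_subtractf)

definition phiP :: "'n key \<Rightarrow> 'n key" where "phiP k = (fst k + snd k, snd k)"
definition phiPi :: "'n key \<Rightarrow> 'n key" where "phiPi k = (fst k - snd k, snd k)"
definition phiM :: "'n key \<Rightarrow> 'n key" where "phiM k = (fst k, fst k + snd k)"
definition phiMi :: "'n key \<Rightarrow> 'n key" where "phiMi k = (fst k, snd k - fst k)"

definition sP :: "(rat \<Rightarrow> Cq) \<Rightarrow> ('n::finite \<Rightarrow> 'n \<Rightarrow> rat) \<Rightarrow> 'n key \<Rightarrow> Cq" where
  "sP qp B k = qp (-2 * wform B (snd k) (snd k))"
definition sPi :: "(rat \<Rightarrow> Cq) \<Rightarrow> ('n::finite \<Rightarrow> 'n \<Rightarrow> rat) \<Rightarrow> 'n key \<Rightarrow> Cq" where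
  "sPi qp B k = qp (2 * wform B (snd k) (snd k))"
definition sM :: "(rat \<Rightarrow> Cq) \<Rightarrow> ('n::finite \<Rightarrow> 'n \<Rightarrow> rat) \<Rightarrow> 'n key \<Rightarrow> Cq" where
  "sM qp B k = qp (-2 * wform B (fst k) (fst k))"
definition sMi :: "(rat \<Rightarrow> Cq) \<Rightarrow> ('n::finite \<Rightarrow> 'n \<Rightarrow> rat) \<Rightarrow> 'n key \<Rightarrow> Cq" where
  "sMi qp B k = qp (2 * wform B (fst k) (fst k))"

lemma phiP_inv [simp]: "phiPi (phiP u) = u" "phiP (phiPi u) = u"
  by (simp_all add: phiP_def phiPi_def)

lemma phiM_inv [simp]: "phiMi (phiM u) = u" "phiM (phiMi u) = u"
  by (simp_all add: phiM_def phiMi_def)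

lemma inj_phis: "inj phiP" "inj phiPi" "inj phiM" "inj phiMi"
  by (metis injI phiP_inv(1), metis injI phiP_inv(2), metis injI phiM_inv(1), metis injI phiM_inv(2))

lemma tau_plus_eq:
  fixes B :: "'n::finite \<Rightarrow> 'n \<Rightarrow> rat"
  assumes q: "qpow_system qp" and Bs: "\<And>i j. B i j = B j i"
  shows "tau_plus qp B = mmap phiPi (sP qp B)"
proof -
  have hom: "is_qt_alg_hom qp B (mmap phiPi (sP qp B))"
  proof (rule mmap_hom[OF q, where \<phi>=phiP])
    fix l1 m1 l2 m2 :: "'n \<Rightarrow> int"
    have sy: "wform B m2 m1 = wform B m1 m2" by (rule wform_sym[OF Bs])
    show "sP qp B (phiP (l1 + l2, m1 + m2)) * qp (-4 * wform B m1 l2) =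
       sP qp B (phiP (l1, m1)) * sP qp B (phiP (l2, m2)) * qp (-4 * wform B (snd (phiP (l1, m1))) (fst (phiP (l2, m2))))"
      by (simp add: sP_def phiP_def qp_add[OF q] wform_plus_left wform_plus_right sy algebra_simps)
  qed (simp_all add: phiP_def phiPi_def sP_def qp_0[OF q] ac_simps)
  have ms: "mmap phiPi (sP qp B) (Poly_Mapping.single u c) = Poly_Mapping.single (phiP u) (sP qp B (phiP u) * c)" for u c
    by (rule mmap_single[OF inj_phis(2)]) simp
  have X: "mmap phiPi (sP qp B) (qt_X (fund_weight i)) =
          qt_smult (qp (-2 * wform B (fund_weight i) (fund_weight i)))
            (qt_mul qp B (qt_Y (fund_weight i)) (qt_X (fund_weight i)))" for i
    by (simp add: qt_X_def qt_Y_def qt_mono_def ms mul_single smult_single phiP_def sP_def qp_0[OF q])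
  have Y: "mmap phiPi (sP qp B) (qt_Y lam) = qt_Y lam" for lam
    by (simp add: qt_Y_def qt_mono_def ms phiP_def sP_def qp_0[OF q])
  show ?thesis unfolding tau_plus_def
  proof (rule the_equality)
    show "is_qt_alg_hom qp B (mmap phiPi (sP qp B)) \<and>
     (\<forall>i. mmap phiPi (sP qp B) (qt_X (fund_weight i)) =
          qt_smult (qp (-2 * wform B (fund_weight i) (fund_weight i)))
            (qt_mul qp B (qt_Y (fund_weight i)) (qt_X (fund_weight i)))) \<and>
     (\<forall>lam. mmap phiPi (sP qp B) (qt_Y lam) = qt_Y lam)"
      using hom X Y by blast
  next
    fix f
    assume "is_qt_alg_hom qp B f \<and>
     (\<forall>i. f (qt_X (fund_weight i)) =
          qt_smult (qp (-2 * wform B (fund_weight i) (fund_weight i)))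
            (qt_mul qp B (qt_Y (fund_weight i)) (qt_X (fund_weight i)))) \<and>
     (\<forall>lam. f (qt_Y lam) = qt_Y lam)"
    then show "f = mmap phiPi (sP qp B)"
      by (intro hom_unique[OF q _ hom]) (simp_all add: X Y)
  qed
qed

lemma tau_minus_eq:
  fixes B :: "'n::finite \<Rightarrow> 'n \<Rightarrow> rat"
  assumes q: "qpow_system qp" and Bs: "\<And>i j. B i j = B j i"
  shows "tau_minus qp B = mmap phiMi (sM qp B)"
proof -
  have hom: "is_qt_alg_hom qp B (mmap phiMi (sM qp B))"
  proof (rule mmap_hom[OF q, where \<phi>=phiM])
    fix l1 m1 l2 m2 :: "'n \<Rightarrow> int"
    have sy: "wform B l2 l1 = wform B l1 l2" by (rule wform_sym[OF Bs])
    show "sM qp B (phiM (l1 + l2, m1 + m2)) * qp (-4 * wform B m1 l2) =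
       sM qp B (phiM (l1, m1)) * sM qp B (phiM (l2, m2)) * qp (-4 * wform B (snd (phiM (l1, m1))) (fst (phiM (l2, m2))))"
      by (simp add: sM_def phiM_def qp_add[OF q] wform_plus_left wform_plus_right sy algebra_simps)
  qed (simp_all add: phiM_def phiMi_def sM_def qp_0[OF q] ac_simps)
  have ms: "mmap phiMi (sM qp B) (Poly_Mapping.single u c) = Poly_Mapping.single (phiM u) (sM qp B (phiM u) * c)" for u c
    by (rule mmap_single[OF inj_phis(4)]) simp
  have Y: "mmap phiMi (sM qp B) (qt_Y (fund_weight i)) =
          qt_smult (qp (2 * wform B (fund_weight i) (fund_weight i)))
            (qt_mul qp B (qt_X (fund_weight i)) (qt_Y (fund_weight i)))" for i
    by (simp add: qt_X_def qt_Y_def qt_mono_def ms mul_single smult_single phiM_def sM_def qp_add[OF q])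
  have X: "mmap phiMi (sM qp B) (qt_X mu) = qt_X mu" for mu
    by (simp add: qt_X_def qt_mono_def ms phiM_def sM_def qp_0[OF q])
  show ?thesis unfolding tau_minus_def
  proof (rule the_equality)
    show "is_qt_alg_hom qp B (mmap phiMi (sM qp B)) \<and>
     (\<forall>mu. mmap phiMi (sM qp B) (qt_X mu) = qt_X mu) \<and>
     (\<forall>i. mmap phiMi (sM qp B) (qt_Y (fund_weight i)) =
          qt_smult (qp (2 * wform B (fund_weight i) (fund_weight i)))
            (qt_mul qp B (qt_X (fund_weight i)) (qt_Y (fund_weight i))))"
      using hom X Y by blast
  next
    fix f
    assume "is_qt_alg_hom qp B f \<and>
     (\<forall>mu. f (qt_X mu) = qt_X mu) \<and>
     (\<forall>i. f (qt_Y (fund_weight i)) =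
          qt_smult (qp (2 * wform B (fund_weight i) (fund_weight i)))
            (qt_mul qp B (qt_X (fund_weight i)) (qt_Y (fund_weight i))))"
    then show "f = mmap phiMi (sM qp B)"
      by (intro hom_unique[OF q _ hom]) (simp_all add: X Y)
  qed
qed


lemma gen_single:
  fixes B :: "'n::finite \<Rightarrow> 'n \<Rightarrow> rat"
  assumes q: "qpow_system qp" and Bs: "\<And>i j. B i j = B j i"
  shows "gen_aut qp B Tp (Poly_Mapping.single (l, m) c) = Poly_Mapping.single (l + m, m) (qp (-2 * wform B m m) * c)"
    and "gen_aut qp B Tp_inv (Poly_Mapping.single (l, m) c) = Poly_Mapping.single (l - m, m) (qp (2 * wform B m m) * c)"
    and "gen_aut qp B Tm (Poly_Mapping.single (l, m) c) = Poly_Mapping.single (l, l + m) (qp (-2 * wform B l l) * c)"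
    and "gen_aut qp B Tm_inv (Poly_Mapping.single (l, m) c) = Poly_Mapping.single (l, m - l) (qp (2 * wform B l l) * c)"
proof -
  have ip: "inv_into UNIV (mmap phiPi (sP qp B)) = mmap phiP (sPi qp B)"
    by (rule mmap_inv) (simp_all add: sP_def sPi_def phiP_def phiPi_def qp_add[OF q] qp_0[OF q])
  have im: "inv_into UNIV (mmap phiMi (sM qp B)) = mmap phiM (sMi qp B)"
    by (rule mmap_inv) (simp_all add: sM_def sMi_def phiM_def phiMi_def qp_add[OF q] qp_0[OF q])
  show "gen_aut qp B Tp (Poly_Mapping.single (l, m) c) = Poly_Mapping.single (l + m, m) (qp (-2 * wform B m m) * c)"
    unfolding gen_aut.simps tau_plus_eq[OF q Bs]
    by (subst mmap_single[OF inj_phis(2) phiP_inv(1)]) (simp add: phiP_def sP_def)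
  show "gen_aut qp B Tp_inv (Poly_Mapping.single (l, m) c) = Poly_Mapping.single (l - m, m) (qp (2 * wform B m m) * c)"
    unfolding gen_aut.simps tau_plus_eq[OF q Bs] ip
    by (subst mmap_single[OF inj_phis(1) phiP_inv(2)]) (simp add: phiPi_def sPi_def)
  show "gen_aut qp B Tm (Poly_Mapping.single (l, m) c) = Poly_Mapping.single (l, l + m) (qp (-2 * wform B l l) * c)"
    unfolding gen_aut.simps tau_minus_eq[OF q Bs]
    by (subst mmap_single[OF inj_phis(4) phiM_inv(1)]) (simp add: phiM_def sM_def)
  show "gen_aut qp B Tm_inv (Poly_Mapping.single (l, m) c) = Poly_Mapping.single (l, m - l) (qp (2 * wform B l l) * c)"
    unfolding gen_aut.simps tau_minus_eq[OF q Bs] im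
    by (subst mmap_single[OF inj_phis(3) phiM_inv(2)]) (simp add: phiMi_def sMi_def)
qed

lemma word_det: "word_mat ms = (b, a, p, r) \<Longrightarrow> b * r - a * p = 1"
proof (induction ms arbitrary: b a p r)
  case Nil
  then show ?case by simp
next
  case (Cons m ms)
  obtain b' a' p' r' where w: "word_mat ms = (b', a', p', r')" by (cases "word_mat ms") auto
  have d: "b' * r' - a' * p' = 1" by (rule Cons.IH[OF w])
  show ?case
    using Cons.prems d by (cases m) (auto simp: w algebra_simps)
qed

definition Kmap :: "mat2 \<Rightarrow> ('n \<Rightarrow> int) \<Rightarrow> ('n \<Rightarrow> int) \<Rightarrow> 'n key" where
  "Kmap g lam mu = (case g of (b, a, p, r) \<Rightarrow> ((\<lambda>i. r * lam i + a * mu i), (\<lambda>i. p * lam i + b * mu i)))"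

definition Eexp :: "('n::finite \<Rightarrow> 'n \<Rightarrow> rat) \<Rightarrow> mat2 \<Rightarrow> ('n \<Rightarrow> int) \<Rightarrow> ('n \<Rightarrow> int) \<Rightarrow> rat" where
  "Eexp B g lam mu = (case g of (b, a, p, r) \<Rightarrow>
     - 2 * wform B mu mu * of_int (a * b) - 4 * wform B mu lam * of_int (a * p)
           - 2 * wform B lam lam * of_int (p * r))"

lemma detlin:
  fixes xx yy cc dd :: rat
  assumes "xx - yy = cc * (dd - 1)" "dd = 1"
  shows "xx = yy"
  using assms by simp

lemma combine:
  assumes q: "qpow_system qp" and "K1 = K2" and "x + y = z"
  shows "Poly_Mapping.single K1 (qp x * c * qp y) = Poly_Mapping.single K2 (c * qp z)"
proof -
  have "qp z = qp x * qp y" using assms(3) qp_add[OF q] by simp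
  then show ?thesis using assms(2) by (simp add: ac_simps)
qed

lemma main_formula:
  fixes B :: "'n::finite \<Rightarrow> 'n \<Rightarrow> rat"
  assumes q: "qpow_system qp" and Bs: "\<And>i j. B i j = B j i"
  shows "word_aut qp B ms (Poly_Mapping.single (lam, mu) c) =
    Poly_Mapping.single (Kmap (word_mat ms) lam mu) (c * qp (Eexp B (word_mat ms) lam mu))"
proof (induction ms arbitrary: lam mu c)
  case Nil
  then show ?case by (simp add: Kmap_def Eexp_def qp_0[OF q])
next
  case (Cons m ms)
  obtain b a p r where w: "word_mat ms = (b, a, p, r)" by (cases "word_mat ms") auto
  have d: "rat_of_int b * rat_of_int r - rat_of_int a * rat_of_int p = 1"
  proof -
    have "b * r - a * p = 1" by (rule word_det[OF w])
    then have "rat_of_int (b * r - a * p) = 1" by simp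
    then show ?thesis by simp
  qed
  have sy: "wform B lam mu = wform B mu lam" by (rule wform_sym[OF Bs])
  show ?case
  proof (cases m)
    case Tp
    have "word_aut qp B (m # ms) (Poly_Mapping.single (lam, mu) c) =
       word_aut qp B ms (Poly_Mapping.single (lam + mu, mu) (qp (-2 * wform B mu mu) * c))"
      by (simp only: Tp word_aut.simps comp_apply gen_single[OF q Bs])
    also have "\<dots> = Poly_Mapping.single (Kmap (b, a, p, r) (lam + mu) mu)
         (qp (-2 * wform B mu mu) * c * qp (Eexp B (b, a, p, r) (lam + mu) mu))"
      by (simp only: Cons.IH w)
    also have "\<dots> = Poly_Mapping.single (Kmap (word_mat (m # ms)) lam mu) (c * qp (Eexp B (word_mat (m # ms)) lam mu))"
    proof (rule combine[OF q])
      show "Kmap (b, a, p, r) (lam + mu) mu = Kmap (word_mat (m # ms)) lam mu"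
        by (simp add: Tp w Kmap_def fun_eq_iff algebra_simps)
      show "-2 * wform B mu mu + Eexp B (b, a, p, r) (lam + mu) mu = Eexp B (word_mat (m # ms)) lam mu"
        apply (rule detlin[where cc = "2 * wform B mu mu" and dd = "rat_of_int b * rat_of_int r - rat_of_int a * rat_of_int p"])
         apply (simp add: Tp w Eexp_def wform_plus_left wform_plus_right sy algebra_simps)
        apply (rule d)
        done
    qed
    finally show ?thesis .
  next
    case Tp_inv
    have "word_aut qp B (m # ms) (Poly_Mapping.single (lam, mu) c) =
       word_aut qp B ms (Poly_Mapping.single (lam - mu, mu) (qp (2 * wform B mu mu) * c))"
      by (simp only: Tp_inv word_aut.simps comp_apply gen_single[OF q Bs])
    also have "\<dots> = Poly_Mapping.single (Kmap (b, a, p, r) (lam - mu) mu)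
         (qp (2 * wform B mu mu) * c * qp (Eexp B (b, a, p, r) (lam - mu) mu))"
      by (simp only: Cons.IH w)
    also have "\<dots> = Poly_Mapping.single (Kmap (word_mat (m # ms)) lam mu) (c * qp (Eexp B (word_mat (m # ms)) lam mu))"
    proof (rule combine[OF q])
      show "Kmap (b, a, p, r) (lam - mu) mu = Kmap (word_mat (m # ms)) lam mu"
        by (simp add: Tp_inv w Kmap_def fun_eq_iff algebra_simps)
      show "2 * wform B mu mu + Eexp B (b, a, p, r) (lam - mu) mu = Eexp B (word_mat (m # ms)) lam mu"
        apply (rule detlin[where cc = "-2 * wform B mu mu" and dd = "rat_of_int b * rat_of_int r - rat_of_int a * rat_of_int p"])
         apply (simp add: Tp_inv w Eexp_def wform_diff_left wform_diff_right sy algebra_simps)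
        apply (rule d)
        done
    qed
    finally show ?thesis .
  next
    case Tm
    have "word_aut qp B (m # ms) (Poly_Mapping.single (lam, mu) c) =
       word_aut qp B ms (Poly_Mapping.single (lam, lam + mu) (qp (-2 * wform B lam lam) * c))"
      by (simp only: Tm word_aut.simps comp_apply gen_single[OF q Bs])
    also have "\<dots> = Poly_Mapping.single (Kmap (b, a, p, r) lam (lam + mu))
         (qp (-2 * wform B lam lam) * c * qp (Eexp B (b, a, p, r) lam (lam + mu)))"
      by (simp only: Cons.IH w)
    also have "\<dots> = Poly_Mapping.single (Kmap (word_mat (m # ms)) lam mu) (c * qp (Eexp B (word_mat (m # ms)) lam mu))"
    proof (rule combine[OF q])
      show "Kmap (b, a, p, r) lam (lam + mu) = Kmap (word_mat (m # ms)) lam mu"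
        by (simp add: Tm w Kmap_def fun_eq_iff algebra_simps)
      show "-2 * wform B lam lam + Eexp B (b, a, p, r) lam (lam + mu) = Eexp B (word_mat (m # ms)) lam mu"
        apply (rule detlin[where cc = "2 * wform B lam lam" and dd = "rat_of_int b * rat_of_int r - rat_of_int a * rat_of_int p"])
         apply (simp add: Tm w Eexp_def wform_plus_left wform_plus_right sy algebra_simps)
        apply (rule d)
        done
    qed
    finally show ?thesis .
  next
    case Tm_inv
    have "word_aut qp B (m # ms) (Poly_Mapping.single (lam, mu) c) =
       word_aut qp B ms (Poly_Mapping.single (lam, mu - lam) (qp (2 * wform B lam lam) * c))"
      by (simp only: Tm_inv word_aut.simps comp_apply gen_single[OF q Bs])
    also have "\<dots> = Poly_Mapping.single (Kmap (b, a, p, r) lam (mu - lam))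
         (qp (2 * wform B lam lam) * c * qp (Eexp B (b, a, p, r) lam (mu - lam)))"
      by (simp only: Cons.IH w)
    also have "\<dots> = Poly_Mapping.single (Kmap (word_mat (m # ms)) lam mu) (c * qp (Eexp B (word_mat (m # ms)) lam mu))"
    proof (rule combine[OF q])
      show "Kmap (b, a, p, r) lam (mu - lam) = Kmap (word_mat (m # ms)) lam mu"
        by (simp add: Tm_inv w Kmap_def fun_eq_iff algebra_simps)
      show "2 * wform B lam lam + Eexp B (b, a, p, r) lam (mu - lam) = Eexp B (word_mat (m # ms)) lam mu"
        apply (rule detlin[where cc = "-2 * wform B lam lam" and dd = "rat_of_int b * rat_of_int r - rat_of_int a * rat_of_int p"])
         apply (simp add: Tm_inv w Eexp_def wform_diff_left wform_diff_right sy algebra_simps)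
        apply (rule d)
        done
    qed
    finally show ?thesis .
  qed
qed

theorem mainTheorem3:
  fixes C :: "'n::finite \<Rightarrow> 'n \<Rightarrow> int" and B :: "'n \<Rightarrow> 'n \<Rightarrow> rat"
    and qp :: "rat \<Rightarrow> Cq" and ms :: "sl2gen list"
    and b a p r :: int and lam mu :: "'n \<Rightarrow> int"
  assumes "simply_laced_cartan C" and "inverse_cartan C B"
    and "qpow_system qp"
    and "b * r - a * p = 1"
    and "word_mat ms = (b, a, p, r)"
  shows "word_aut qp B ms (qt_mono lam mu) =
    qt_smult
      (qp (- 2 * wform B mu mu * of_int (a * b) - 4 * wform B mu lam * of_int (a * p)
           - 2 * wform B lam lam * of_int (p * r)))
      (qt_mono (\<lambda>i. r * lam i + a * mu i) (\<lambda>i. p * lam i + b * mu i))"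
proof -
  have Bs: "\<And>i j. B i j = B j i" by (rule B_sym[OF assms(1,2)])
  show ?thesis
    unfolding qt_mono_def
    by (simp add: main_formula[OF assms(3) Bs] assms(5) Kmap_def Eexp_def smult_single)
qed

end
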